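(* Every reflection point of $\mathrm{OPT}$ that is not a tip (endpoint) of a segment is a pure reflection point.
   Context: Instance: vertical line segments $s_1,\dots,s_n$ in $\mathbb{R}^2$, each of length $1$, with pairwise distinct $x$-coordinates. A tour is a cyclic sequence of points $p_1,\dots,p_\sigma$, each on some segment, with every segment containing at least one $p_j$; the straight segments joining consecutive points are legs; cost is total length. $\mathrm{OPT}$ is a fixed minimum-cost tour, oriented $p_1\to p_2\to\cdots$, with no two consecutive points on the same segment and not self-crossing. For a point $p_j$ of $\mathrm{OPT}$ on segment $s$, a leg incident to $p_j$ is to the left (right) of $s$ if it lies in $x\le x(s)$ (resp. $x\ge x(s)$); $p_j$ is a reflection point if both incident legs are to the left of $s$ or both are to the right of $s$. A reflection point $p_j$ on $s$ is a pure reflection point if the two legs incident to $p_j$ make the same angle with $s$. *)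

theory Defs
  imports "HOL-Analysis.Analysis"
begin

type_synonym pt = "real \<times> real"

definition vseg :: "(nat \<Rightarrow> real) \<Rightarrow> (nat \<Rightarrow> real) \<Rightarrow> nat \<Rightarrow> pt set" where
  "vseg sx sy i = {(sx i, y) | y. sy i \<le> y \<and> y \<le> sy i + 1}"

definition instance_ok :: "nat \<Rightarrow> (nat \<Rightarrow> real) \<Rightarrow> bool" where
  "instance_ok n sx \<longleftrightarrow> inj_on sx {..<n}"

definition is_tour :: "nat \<Rightarrow> (nat \<Rightarrow> real) \<Rightarrow> (nat \<Rightarrow> real) \<Rightarrow> pt list \<Rightarrow> bool" where
  "is_tour n sx sy ps \<longleftrightarrow> ps \<noteq> [] \<and>
     (\<forall>p\<in>set ps. \<exists>i<n. p \<in> vseg sx sy i) \<and>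
     (\<forall>i<n. \<exists>p\<in>set ps. p \<in> vseg sx sy i)"

definition nxt :: "pt list \<Rightarrow> nat \<Rightarrow> pt" where
  "nxt ps j = ps ! ((j + 1) mod length ps)"

definition prv :: "pt list \<Rightarrow> nat \<Rightarrow> pt" where
  "prv ps j = ps ! ((j + length ps - 1) mod length ps)"

definition tour_cost :: "pt list \<Rightarrow> real" where
  "tour_cost ps = (\<Sum>j<length ps. dist (ps ! j) (nxt ps j))"

definition is_opt_tour :: "nat \<Rightarrow> (nat \<Rightarrow> real) \<Rightarrow> (nat \<Rightarrow> real) \<Rightarrow> pt list \<Rightarrow> bool" where
  "is_opt_tour n sx sy ps \<longleftrightarrow> is_tour n sx sy ps \<and>
     (\<forall>qs. is_tour n sx sy qs \<longrightarrow> tour_cost ps \<le> tour_cost qs)"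

definition no_consec_same_seg :: "nat \<Rightarrow> (nat \<Rightarrow> real) \<Rightarrow> (nat \<Rightarrow> real) \<Rightarrow> pt list \<Rightarrow> bool" where
  "no_consec_same_seg n sx sy ps \<longleftrightarrow>
     (\<forall>j<length ps. \<forall>i<n. \<not> (ps ! j \<in> vseg sx sy i \<and> nxt ps j \<in> vseg sx sy i))"

definition legs_cross :: "pt \<Rightarrow> pt \<Rightarrow> pt \<Rightarrow> pt \<Rightarrow> bool" where
  "legs_cross a b c d \<longleftrightarrow>
     (fst b - fst a) * (snd d - snd c) - (snd b - snd a) * (fst d - fst c) \<noteq> 0 \<and>
     open_segment a b \<inter> open_segment c d \<noteq> {}"

definition not_self_crossing :: "pt list \<Rightarrow> bool" where
  "not_self_crossing ps \<longleftrightarrow>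
     (\<forall>j<length ps. \<forall>k<length ps. \<not> legs_cross (ps ! j) (nxt ps j) (ps ! k) (nxt ps k))"

text \<open>Leg from p_j to q lies to the left of segment with x-coordinate x iff it lies in
  {x' <= x}; since p_j has x-coordinate x, this means fst q <= x.\<close>
definition is_reflection_point ::
  "(nat \<Rightarrow> real) \<Rightarrow> (nat \<Rightarrow> real) \<Rightarrow> pt list \<Rightarrow> nat \<Rightarrow> nat \<Rightarrow> bool" where
  "is_reflection_point sx sy ps j i \<longleftrightarrow> ps ! j \<in> vseg sx sy i \<and>
     ((closed_segment (ps ! j) (prv ps j) \<subseteq> {q. fst q \<le> sx i} \<and>
       closed_segment (ps ! j) (nxt ps j) \<subseteq> {q. fst q \<le> sx i}) \<or>
      (closed_segment (ps ! j) (prv ps j) \<subseteq> {q. fst q \<ge> sx i} \<and>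
       closed_segment (ps ! j) (nxt ps j) \<subseteq> {q. fst q \<ge> sx i}))"

definition vec_angle :: "pt \<Rightarrow> pt \<Rightarrow> real" where
  "vec_angle u v = arccos (inner u v / (norm u * norm v))"

text \<open>Pure reflection: the two legs make the same angle with s, i.e. the angle of the
  incoming leg with one direction of s equals the angle of the outgoing leg with the
  opposite direction of s (angle of incidence = angle of reflection).\<close>
definition is_pure_reflection_point ::
  "(nat \<Rightarrow> real) \<Rightarrow> (nat \<Rightarrow> real) \<Rightarrow> pt list \<Rightarrow> nat \<Rightarrow> nat \<Rightarrow> bool" where
  "is_pure_reflection_point sx sy ps j i \<longleftrightarrow> is_reflection_point sx sy ps j i \<and>
     vec_angle (prv ps j - ps ! j) (0, 1) = vec_angle (nxt ps j - ps ! j) (0, -1)"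

definition is_tip :: "(nat \<Rightarrow> real) \<Rightarrow> (nat \<Rightarrow> real) \<Rightarrow> nat \<Rightarrow> pt \<Rightarrow> bool" where
  "is_tip sx sy i p \<longleftrightarrow> p = (sx i, sy i) \<or> p = (sx i, sy i + 1)"

end

theory Submission
  imports Defs
begin

lemma deriv_sq:
  fixes c w :: real
  assumes "c + w^2 > 0"
  shows "((\<lambda>t. sqrt (c + (w - t)^2)) has_real_derivative (- w / sqrt (c + w^2))) (at 0)"
proof -
  have "((\<lambda>t. sqrt (c + (w - t)^2)) has_real_derivative
        (inverse (sqrt (c + (w - 0)^2)) / 2 * (0 + 2 * (w - 0) * (0 - 1)))) (at 0)"
    apply (rule DERIV_chain2[where f=sqrt])
     apply (rule DERIV_real_sqrt) using assms apply simp
    apply (rule derivative_eq_intros refl)+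
    apply simp
    done
  moreover have "inverse (sqrt (c + (w - 0)^2)) / 2 * (0 + 2 * (w - 0) * (0 - 1)) = - w / sqrt (c + w^2)"
    by (simp add: field_simps)
  ultimately show ?thesis by simp
qed

lemma sum_two_diff:
  fixes f g :: "nat \<Rightarrow> real"
  assumes "a < L" "b < L" "a \<noteq> b" "\<And>k. k < L \<Longrightarrow> k \<noteq> a \<Longrightarrow> k \<noteq> b \<Longrightarrow> f k = g k"
  shows "(\<Sum>k<L. g k) = (\<Sum>k<L. f k) - f a - f b + g a + g b"
proof -
  have S: "(\<Sum>k<L. h k) = h a + h b + (\<Sum>k\<in>{..<L} - {a} - {b}. h k)" for h :: "nat \<Rightarrow> real"
  proof -
    have "(\<Sum>k<L. h k) = h a + (\<Sum>k\<in>{..<L} - {a}. h k)"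
      using assms(1) by (simp add: sum.remove)
    also have "(\<Sum>k\<in>{..<L} - {a}. h k) = h b + (\<Sum>k\<in>{..<L} - {a} - {b}. h k)"
      using assms(2,3) by (subst sum.remove[of _ b]) auto
    finally show ?thesis by simp
  qed
  have "(\<Sum>k\<in>{..<L} - {a} - {b}. f k) = (\<Sum>k\<in>{..<L} - {a} - {b}. g k)"
    by (rule sum.cong) (auto intro: assms(4))
  then show ?thesis using S[of f] S[of g] by simp
qed

theorem lemma2:
  fixes n :: nat and sx sy :: "nat \<Rightarrow> real" and OPT :: "pt list" and j i :: nat
  assumes "instance_ok n sx"
    and "is_opt_tour n sx sy OPT"
    and "no_consec_same_seg n sx sy OPT"
    and "not_self_crossing OPT"
    and "j < length OPT" and "i < n"
    and "is_reflection_point sx sy OPT j i"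
    and "\<not> is_tip sx sy i (OPT ! j)"
  shows "is_pure_reflection_point sx sy OPT j i"
proof -
  define L where "L = length OPT"
  define jm where "jm = (j + L - 1) mod L"
  define jn where "jn = (j + 1) mod L"
  obtain a1 a2 where aeq: "prv OPT j = (a1, a2)" by fastforce
  obtain b1 b2 where beq: "nxt OPT j = (b1, b2)" by fastforce
  have pin: "OPT ! j \<in> vseg sx sy i" using assms(7) unfolding is_reflection_point_def by blast
  then obtain y where peq: "OPT ! j = (sx i, y)" and y1: "sy i \<le> y" and y2: "y \<le> sy i + 1"
    unfolding vseg_def by blast
  have ylt1: "sy i < y" and ylt2: "y < sy i + 1"
    using assms(8) y1 y2 peq unfolding is_tip_def by auto
  have jL: "j < L" using assms(5) L_def by simp
  have nc: "\<not> (OPT ! k \<in> vseg sx sy i \<and> nxt OPT k \<in> vseg sx sy i)" if "k < L" for k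
    using assms(3) assms(6) that unfolding no_consec_same_seg_def L_def by blast
  have L2: "L \<ge> 2"
  proof (rule ccontr)
    assume "\<not> L \<ge> 2"
    then have "L = 1" using jL by simp
    then have "nxt OPT j = OPT ! j" unfolding nxt_def L_def[symmetric] using jL by simp
    then show False using nc[OF jL] pin by simp
  qed
  have jmL: "jm < L" unfolding jm_def using L2 by simp
  have jnL: "jn < L" unfolding jn_def using L2 by simp
  have jm_ne: "jm \<noteq> j" and jm_succ: "(jm + 1) mod L = j"
  proof -
    have "jm \<noteq> j \<and> (jm + 1) mod L = j"
    proof (cases "j = 0")
      case True
      then have "jm = L - 1" unfolding jm_def using L2 by simp
      then show ?thesis using True L2 by simp
    next
      case False
      then have "j + L - 1 = (j - 1) + L" by simp
      then have "jm = ((j - 1) + L) mod L" unfolding jm_def by (simp only:)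
      also have "\<dots> = (j - 1) mod L" by (rule mod_add_self2)
      also have "\<dots> = j - 1" using jL by (intro mod_less) simp
      finally have "jm = j - 1" .
      then show ?thesis using False jL by simp
    qed
    then show "jm \<noteq> j" "(jm + 1) mod L = j" by auto
  qed
  have prv_eq: "prv OPT j = OPT ! jm" unfolding prv_def jm_def L_def by simp
  have nxt_eq: "nxt OPT j = OPT ! jn" unfolding nxt_def jn_def L_def by simp
  have nxt_jm: "nxt OPT jm = OPT ! j" unfolding nxt_def using jm_succ L_def by simp
  have a_notin: "prv OPT j \<notin> vseg sx sy i" using nc[OF jmL] nxt_jm pin prv_eq by simp
  have b_notin: "nxt OPT j \<notin> vseg sx sy i" using nc[OF jL] pin by simp
  have a_ne: "(a1, a2) \<noteq> (sx i, y)" using a_notin aeq peq pin by auto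
  have b_ne: "(b1, b2) \<noteq> (sx i, y)" using b_notin beq peq pin by auto
  have ca: "(a1 - sx i)^2 + (a2 - y)^2 > 0"
    using a_ne by (auto simp: sum_power2_gt_zero_iff)
  have cb: "(b1 - sx i)^2 + (b2 - y)^2 > 0"
    using b_ne by (auto simp: sum_power2_gt_zero_iff)
  define h where "h t = sqrt ((a1 - sx i)^2 + ((a2 - y) - t)^2) + sqrt ((b1 - sx i)^2 + ((b2 - y) - t)^2)" for t
  define Q where "Q t = OPT[j := (sx i, y + t)]" for t
  have dist_a: "dist (a1, a2) (sx i, y + t) = sqrt ((a1 - sx i)^2 + ((a2 - y) - t)^2)" for t
    by (simp add: dist_Pair_Pair dist_real_def power2_abs algebra_simps)
  have dist_b: "dist (sx i, y + t) (b1, b2) = sqrt ((b1 - sx i)^2 + ((b2 - y) - t)^2)" for t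
    by (simp add: dist_Pair_Pair dist_real_def power2_abs algebra_simps power2_commute)
  define d where "d = min (y - sy i) (sy i + 1 - y)"
  have dpos: "d > 0" unfolding d_def using ylt1 ylt2 by simp
  have cost_Q: "tour_cost (Q t) = tour_cost OPT - h 0 + h t" for t
  proof -
    have lenQ: "length (Q t) = L" unfolding Q_def L_def by simp
    have "tour_cost (Q t) = (\<Sum>k<L. dist (Q t ! k) (Q t ! ((k+1) mod L)))"
      unfolding tour_cost_def nxt_def lenQ by simp
    also have "\<dots> = (\<Sum>k<L. dist (OPT ! k) (OPT ! ((k+1) mod L)))
       - dist (OPT ! j) (OPT ! ((j+1) mod L)) - dist (OPT ! jm) (OPT ! ((jm+1) mod L))
       + dist (Q t ! j) (Q t ! ((j+1) mod L)) + dist (Q t ! jm) (Q t ! ((jm+1) mod L))"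
    proof (rule sum_two_diff[OF jL jmL jm_ne[symmetric]])
      fix k assume k: "k < L" "k \<noteq> j" "k \<noteq> jm"
      have "(k + 1) mod L \<noteq> j"
      proof
        assume h1: "(k + 1) mod L = j"
        have "jm = k"
        proof (cases "k + 1 < L")
          case True
          then have "j = k + 1" using h1 by simp
          then show ?thesis unfolding jm_def using True by simp
        next
          case False
          then have "k = L - 1" using k by simp
          then have "j = 0" using h1 L2 by simp
          then show ?thesis unfolding jm_def using \<open>k = L - 1\<close> L2 by simp
        qed
        then show False using k by simp
      qed
      then show "dist (OPT ! k) (OPT ! ((k+1) mod L)) = dist (Q t ! k) (Q t ! ((k+1) mod L))"
        unfolding Q_def using k by simp
    qed
    also have "\<dots> = tour_cost OPT - h 0 + h t"
    proof -
      have e1: "Q t ! j = (sx i, y + t)" unfolding Q_def using jL L_def by simp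
      have jn_ne: "jn \<noteq> j"
      proof (cases "j + 1 < L")
        case True then show ?thesis unfolding jn_def by simp
      next
        case False then have "j = L - 1" using jL by simp
        then show ?thesis unfolding jn_def using L2 by simp
      qed
      have e2: "Q t ! ((j+1) mod L) = (b1, b2)"
        using jn_ne jn_def nxt_eq beq unfolding Q_def by simp
      have e3: "Q t ! jm = (a1, a2)" using jm_ne prv_eq aeq unfolding Q_def by simp
      have e4: "Q t ! ((jm+1) mod L) = (sx i, y + t)" using jm_succ e1 by simp
      have f1: "OPT ! ((j+1) mod L) = (b1, b2)" using jn_def nxt_eq beq by simp
      have f2: "OPT ! jm = (a1, a2)" using prv_eq aeq by simp
      have f3: "OPT ! ((jm+1) mod L) = (sx i, y + 0)" using jm_succ peq by simp
      have f4: "OPT ! j = (sx i, y + 0)" using peq by simp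
      have tc: "tour_cost OPT = (\<Sum>k<L. dist (OPT ! k) (OPT ! ((k+1) mod L)))"
        unfolding tour_cost_def nxt_def L_def by simp
      show ?thesis unfolding tc e1 e2 e3 e4 f1 f2 f3 f4 dist_a dist_b h_def by simp
    qed
    finally show ?thesis .
  qed
  have loc: "h 0 \<le> h t" if t: "\<bar>0 - t\<bar> < d" for t
  proof -
    have tt: "sy i \<le> y + t" "y + t \<le> sy i + 1" using t unfolding d_def by auto
    have newin: "(sx i, y + t) \<in> vseg sx sy i" unfolding vseg_def using tt by auto
    have tour: "is_tour n sx sy OPT" using assms(2) unfolding is_opt_tour_def by blast
    have "is_tour n sx sy (Q t)"
      unfolding is_tour_def
    proof (intro conjI ballI allI impI)
      show "Q t \<noteq> []" unfolding Q_def using tour unfolding is_tour_def by simp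
    next
      fix q assume "q \<in> set (Q t)"
      then have "q \<in> insert (sx i, y + t) (set OPT)" unfolding Q_def
        using set_update_subset_insert by fastforce
      then show "\<exists>i<n. q \<in> vseg sx sy i" using tour newin assms(6) unfolding is_tour_def by blast
    next
      fix i' assume i': "i' < n"
      then obtain q where q: "q \<in> set OPT" "q \<in> vseg sx sy i'" using tour unfolding is_tour_def by blast
      then obtain k where k: "k < L" "OPT ! k = q" unfolding L_def by (metis in_set_conv_nth)
      show "\<exists>p\<in>set (Q t). p \<in> vseg sx sy i'"
      proof (cases "k = j")
        case True
        then have "sx i' = sx i" using q k peq unfolding vseg_def by auto
        then have "i' = i" using assms(1) i' assms(6) unfolding instance_ok_def inj_on_def by blast
        moreover have "(sx i, y + t) \<in> set (Q t)" unfolding Q_def using jL L_def by (simp add: set_update_memI)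
        ultimately show ?thesis using newin by blast
      next
        case False
        then have "Q t ! k = q" unfolding Q_def using k by simp
        moreover have "k < length (Q t)" unfolding Q_def using k L_def by simp
        ultimately show ?thesis using q by (metis nth_mem)
      qed
    qed
    then have "tour_cost OPT \<le> tour_cost (Q t)" using assms(2) unfolding is_opt_tour_def by blast
    then show ?thesis using cost_Q[of t] by simp
  qed
  have D: "(h has_real_derivative
      (- (a2 - y) / sqrt ((a1 - sx i)^2 + (a2 - y)^2) + - (b2 - y) / sqrt ((b1 - sx i)^2 + (b2 - y)^2))) (at 0)"
    unfolding h_def[abs_def] using deriv_sq[OF ca] deriv_sq[OF cb] by (intro DERIV_add)
  have zero: "- (a2 - y) / sqrt ((a1 - sx i)^2 + (a2 - y)^2) + - (b2 - y) / sqrt ((b1 - sx i)^2 + (b2 - y)^2) = 0"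
    using DERIV_local_min[OF D dpos] loc by blast
  then have eq: "(a2 - y) / sqrt ((a1 - sx i)^2 + (a2 - y)^2) = - (b2 - y) / sqrt ((b1 - sx i)^2 + (b2 - y)^2)"
    by (simp only: minus_divide_left[symmetric])
  show ?thesis
    unfolding is_pure_reflection_point_def vec_angle_def
    using assms(7) eq aeq beq peq
    by (simp add: inner_Pair norm_Pair)
qed

end
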